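(* Let $a\ge 2$ be an integer, $p$ a prime and $n\ge 1$ an integer. Then $$N=\frac{a^{p^n}-1}{a^{p^{n-1}}-1}$$ is primover to base $a$ if and only if $\gcd\bigl(N,\,a^{p^{n-1}}-1\bigr)=1$.
   Context: For an integer $a>1$ and an odd integer $n>1$ with $\gcd(a,n)=1$: $h_a(n)$ denotes the multiplicative order of $a$ modulo $n$. A cyclotomic coset of $a$ modulo $n$ is a set of the form $\{\, s a^j \bmod n : j\ge 0\,\}$ with $s\in\{1,\dots,n-1\}$; these cosets partition $\{1,\dots,n-1\}$, and $r_a(n)$ denotes the number of distinct cyclotomic cosets of $a$ modulo $n$. An odd composite number $n$ coprime to $a$ is called an overpseudoprime to base $a$ if $n=r_a(n)\,h_a(n)+1$. An integer $N>1$ is called primover to base $a$ if it is either prime or an overpseudoprime to base $a$. *)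

theory Defs
  imports "HOL-Number_Theory.Number_Theory"
begin

definition h_ord :: "nat \<Rightarrow> nat \<Rightarrow> nat" where
  "h_ord a n = ord n a"

definition cyc_coset :: "nat \<Rightarrow> nat \<Rightarrow> nat \<Rightarrow> nat set" where
  "cyc_coset a n s = {(s * a ^ j) mod n | j. True}"

definition r_cos :: "nat \<Rightarrow> nat \<Rightarrow> nat" where
  "r_cos a n = card (cyc_coset a n ` {1..n-1})"

definition overpseudoprime :: "nat \<Rightarrow> nat \<Rightarrow> bool" where
  "overpseudoprime a n \<longleftrightarrow> odd n \<and> n > 1 \<and> \<not> prime n \<and> coprime a n
     \<and> n = r_cos a n * h_ord a n + 1"

definition primover :: "nat \<Rightarrow> nat \<Rightarrow> bool" where
  "primover a N \<longleftrightarrow> N > 1 \<and> (prime N \<or> overpseudoprime a N)"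

end

theory Submission
  imports Defs
begin


lemma pow_mod_ord:
  fixes a N s j :: nat
  assumes "coprime a N"
  shows "s * a ^ j mod N = s * a ^ (j mod ord N a) mod N"
proof -
  let ?h = "ord N a"
  have h1: "[a ^ ?h = 1] (mod N)" using ord_works by blast
  have "a ^ j = a ^ (?h * (j div ?h) + j mod ?h)" by simp
  also have "\<dots> = (a ^ ?h) ^ (j div ?h) * a ^ (j mod ?h)"
    by (simp only: power_add power_mult)
  finally have "a ^ j = (a ^ ?h) ^ (j div ?h) * a ^ (j mod ?h)" .
  moreover have "[(a ^ ?h) ^ (j div ?h) * a ^ (j mod ?h) = 1 ^ (j div ?h) * a ^ (j mod ?h)] (mod N)"
    by (intro cong_mult cong_pow h1 cong_refl)
  ultimately have "[s * a ^ j = s * a ^ (j mod ?h)] (mod N)"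
    by (simp add: cong_scalar_left)
  then show ?thesis by (simp add: cong_def)
qed

lemma coset_img:
  fixes a N s :: nat
  assumes "coprime a N"
  shows "cyc_coset a N s = (\<lambda>j. s * a ^ j mod N) ` {..<ord N a}"
proof -
  have hp: "ord N a > 0" using assms by (simp add: coprime_commute)
  show ?thesis unfolding cyc_coset_def
  proof (auto)
    fix j show "s * a ^ j mod N \<in> (\<lambda>j. s * a ^ j mod N) ` {..<ord N a}"
      using pow_mod_ord[OF assms, of s j] hp by (intro image_eqI[of _ _ "j mod ord N a"]) auto
  qed
qed

lemma coset_card_le:
  fixes a N s :: nat
  assumes "coprime a N"
  shows "card (cyc_coset a N s) \<le> ord N a" "finite (cyc_coset a N s)"
  using card_image_le[of "{..<ord N a}" "\<lambda>j. s * a ^ j mod N"] coset_img[OF assms] by auto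

lemma coset_sub:
  fixes a N s :: nat
  assumes "coprime a N" "1 < N" "s \<in> {1..N-1}"
  shows "cyc_coset a N s \<subseteq> {1..N-1}"
proof
  fix x assume "x \<in> cyc_coset a N s"
  then obtain j where x: "x = s * a ^ j mod N" unfolding cyc_coset_def by auto
  have "x < N" using x assms by simp
  moreover have "x \<noteq> 0"
  proof
    assume "x = 0"
    then have "N dvd s * a ^ j" using x by auto
    moreover have "coprime N (a ^ j)" using assms by (simp add: coprime_commute)
    ultimately have "N dvd s" by (simp add: coprime_dvd_mult_left_iff)
    then show False using assms by (auto dest: dvd_imp_le)
  qed
  ultimately show "x \<in> {1..N-1}" by auto
qed

lemma coset_self:
  fixes a N s :: nat
  assumes "s < N"
  shows "s \<in> cyc_coset a N s"
  unfolding cyc_coset_def using assms by (auto intro: exI[of _ 0])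

lemma coset_eq:
  fixes a N s x :: nat
  assumes "coprime a N" "x \<in> cyc_coset a N s"
  shows "cyc_coset a N x = cyc_coset a N s"
proof -
  let ?h = "ord N a"
  have hp: "?h > 0" using assms by (simp add: coprime_commute)
  obtain j where x: "x = s * a ^ j mod N" using assms unfolding cyc_coset_def by auto
  have xk: "x * a ^ k mod N = s * a ^ (j + k) mod N" for k
    by (simp add: x mod_mult_left_eq power_add mult.assoc)
  show ?thesis
  proof
    show "cyc_coset a N x \<subseteq> cyc_coset a N s"
      unfolding cyc_coset_def using xk by auto
    show "cyc_coset a N s \<subseteq> cyc_coset a N x"
    proof
      fix y assume "y \<in> cyc_coset a N s"
      then obtain k where y: "y = s * a ^ k mod N" unfolding cyc_coset_def by auto
      have e: "(j + (k + (?h - 1) * j)) mod ?h = k mod ?h"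
      proof -
        have "j + (k + (?h - 1) * j) = k + ?h * j" using hp
          by (cases ?h) (auto simp: algebra_simps)
        then show ?thesis by (metis mod_mult_self2)
      qed
      have "x * a ^ (k + (?h - 1) * j) mod N = s * a ^ (j + (k + (?h - 1) * j)) mod N"
        by (rule xk)
      also have "\<dots> = s * a ^ ((j + (k + (?h - 1) * j)) mod ?h) mod N"
        by (rule pow_mod_ord[OF assms(1)])
      also have "\<dots> = s * a ^ (k mod ?h) mod N" by (simp only: e)
      also have "\<dots> = y" using pow_mod_ord[OF assms(1), of s k] y by simp
      finally have "x * a ^ (k + (?h - 1) * j) mod N = y" .
      then show "y \<in> cyc_coset a N x" unfolding cyc_coset_def by blast
    qed
  qed
qed

lemma coset_partition:
  fixes a N :: nat
  assumes "coprime a N" "1 < N"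
  shows "N - 1 = sum card (cyc_coset a N ` {1..N-1})"
proof -
  let ?A = "cyc_coset a N ` {1..N-1}"
  have U: "\<Union>?A = {1..N-1}"
  proof
    show "\<Union>?A \<subseteq> {1..N-1}" using coset_sub[OF assms] by blast
    show "{1..N-1} \<subseteq> \<Union>?A"
    proof
      fix s assume s: "s \<in> {1..N-1}"
      then have "s < N" using assms by auto
      then have "s \<in> cyc_coset a N s" by (rule coset_self)
      then show "s \<in> \<Union>?A" using s by blast
    qed
  qed
  have D: "pairwise disjnt ?A"
  proof (rule pairwiseI)
    fix X Y assume X: "X \<in> ?A" and Y: "Y \<in> ?A" and XY: "X \<noteq> Y"
    then obtain s t where st: "X = cyc_coset a N s" "Y = cyc_coset a N t" by blast
    show "disjnt X Y"
    proof (rule ccontr)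
      assume "\<not> disjnt X Y"
      then obtain x where x: "x \<in> X" "x \<in> Y" unfolding disjnt_def by blast
      have "cyc_coset a N x = X" using coset_eq[OF assms(1), of x s] x st by simp
      moreover have "cyc_coset a N x = Y" using coset_eq[OF assms(1), of x t] x st by simp
      ultimately show False using XY by simp
    qed
  qed
  have "card (\<Union>?A) = sum card ?A"
    by (rule card_Union_disjoint[OF D]) (use coset_card_le[OF assms(1)] in auto)
  then show ?thesis using U by simp
qed



lemma geom_nat:
  fixes c m :: nat
  shows "c * (\<Sum>i<m. (Suc c) ^ i) + 1 = (Suc c) ^ m"
proof (induction m)
  case 0 then show ?case by simp
next
  case (Suc m)
  have "c * (\<Sum>i<Suc m. (Suc c) ^ i) + 1 = (c * (\<Sum>i<m. (Suc c) ^ i) + 1) + c * (Suc c) ^ m"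
    by (simp add: distrib_left)
  also have "\<dots> = (Suc c) ^ m + c * (Suc c) ^ m" using Suc by simp
  also have "\<dots> = (Suc c) ^ Suc m" by simp
  finally show ?case .
qed

lemma fermat_pow:
  fixes a p k :: nat
  assumes "prime p"
  shows "[a ^ (p ^ k) = a] (mod p)"
proof -
  have F: "[x ^ p = x] (mod p)" for x :: nat
  proof (cases "p dvd x")
    case True
    then have "p dvd x ^ p" by (metis True dvd_power dvd_trans prime_gt_0_nat assms)
    then show ?thesis using True by (simp add: cong_def dvd_eq_mod_eq_0)
  next
    case False
    have "[x ^ (p - 1) = 1] (mod p)" using fermat_theorem[OF assms False] .
    then have "[x * x ^ (p - 1) = x * 1] (mod p)" by (rule cong_scalar_left)
    moreover have "x * x ^ (p - 1) = x ^ p" using prime_gt_0_nat[OF assms]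
      by (metis Suc_diff_1 power_Suc)
    ultimately show ?thesis by (metis mult_1_right)
  qed
  show ?thesis
  proof (induction k)
    case 0 then show ?case by simp
  next
    case (Suc k)
    have pk: "p ^ Suc k = p ^ k * p" by (simp add: mult.commute)
    have "a ^ (p ^ Suc k) = (a ^ (p ^ k)) ^ p"
      by (simp only: pk power_mult)
    moreover have "[(a ^ (p ^ k)) ^ p = a ^ p] (mod p)" using Suc by (rule cong_pow)
    ultimately show ?case using F[of a] by (metis cong_trans)
  qed
qed

lemma coset_full:
  fixes a N s :: nat
  assumes cop: "coprime a N" and N1: "1 < N" and s: "0 < s" "s < N"
    and key: "\<And>q k. prime q \<Longrightarrow> q dvd N \<Longrightarrow> 0 < k \<Longrightarrow> k < ord N a \<Longrightarrow> \<not> q dvd a ^ k - 1"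
  shows "card (cyc_coset a N s) = ord N a"
proof -
  let ?h = "ord N a"
  have inj: "inj_on (\<lambda>j. s * a ^ j mod N) {..<?h}"
  proof (rule linorder_inj_onI')
    fix i j assume i: "i \<in> {..<?h}" and j: "j \<in> {..<?h}" and ij: "i < j"
    show "s * a ^ i mod N \<noteq> s * a ^ j mod N"
    proof
      assume eq: "s * a ^ i mod N = s * a ^ j mod N"
      define k where "k = j - i"
      have k0: "0 < k" and kh: "k < ?h" using ij j by (auto simp: k_def)
      have "a ^ j = a ^ i * a ^ k" using ij by (simp add: k_def power_add[symmetric])
      then have "[a ^ i * s = a ^ i * (s * a ^ k)] (mod N)"
        using eq by (simp add: cong_def mult.commute mult.left_commute)
      moreover have "coprime (a ^ i) N" using cop by simp
      ultimately have "[s = s * a ^ k] (mod N)" by (simp add: cong_mult_lcancel_nat)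
      moreover have "s \<le> s * a ^ k"
      proof -
        have "a ^ k \<noteq> 0"
        proof
          assume "a ^ k = 0" then have "a = 0" by simp
          then show False using cop N1 by simp
        qed
        then show ?thesis by (simp add: Suc_le_eq)
      qed
      ultimately have "N dvd s * a ^ k - s" using cong_altdef_nat by (metis cong_sym)
      then have dv: "N dvd s * (a ^ k - 1)" by (simp add: diff_mult_distrib2)
      define g where "g = gcd s N"
      define d where "d = N div g"
      define s' where "s' = s div g"
      have g0: "g > 0" using s by (simp add: g_def)
      have Nd: "N = g * d" by (simp add: d_def g_def)
      have ss: "s = g * s'" by (simp add: s'_def g_def)
      have cp: "coprime d s'" unfolding d_def s'_def g_def
        using div_gcd_coprime[of s N] s by (simp add: coprime_commute)
      have "g * d dvd g * (s' * (a ^ k - 1))" using dv Nd ss by (simp add: mult.assoc)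
      then have "d dvd s' * (a ^ k - 1)" using g0 by simp
      then have dk: "d dvd a ^ k - 1" using cp by (simp add: coprime_dvd_mult_right_iff)
      have "d \<noteq> 1"
      proof
        assume "d = 1" then have "N dvd s" using Nd ss by simp
        then show False using s by (auto dest: dvd_imp_le)
      qed
      then obtain q where q: "prime q" "q dvd d" using prime_factor_nat by blast
      have "q dvd N" using q Nd by simp
      moreover have "q dvd a ^ k - 1" using q dk dvd_trans by blast
      ultimately show False using key q k0 kh by blast
    qed
  qed
  show ?thesis using card_image[OF inj] coset_img[OF cop] by simp
qed

lemma Sp_lem: fixes b p :: nat assumes b2: "b \<ge> 2" and p2: "p \<ge> 2" shows "p < (\<Sum>i<p. b ^ i)"
  proof -
    have "(\<Sum>i<p. (1::nat)) < (\<Sum>i<p. b ^ i)"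
    proof (rule sum_strict_mono_ex1[OF finite_lessThan])
      show "\<forall>x\<in>{..<p}. 1 \<le> b ^ x" using b2 by (simp add: Suc_le_eq)
      have "1 \<in> {..<p}" using p2 by simp
      moreover have "1 < b ^ 1" using b2 by simp
      ultimately show "\<exists>x\<in>{..<p}. 1 < b ^ x" by blast
    qed
    then show ?thesis by simp
  qed
lemma Sb_lem: fixes b p :: nat assumes b2: "b \<ge> 2" and p2: "p \<ge> 2" shows "b + 1 \<le> (\<Sum>i<p. b ^ i)"
  proof -
    have sub: "{0,1} \<subseteq> {..<p}" using p2 by auto
    have "(\<Sum>i\<in>{0,1}. b ^ i) \<le> (\<Sum>i<p. b ^ i)"
      by (rule sum_mono2[OF finite_lessThan sub]) simp
    then show ?thesis by simp
  qed

theorem theorem7: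
  fixes a p n :: nat
  assumes "a \<ge> 2" and "prime p" and "n \<ge> 1"
  shows "primover a ((a ^ (p ^ n) - 1) div (a ^ (p ^ (n - 1)) - 1))
     \<longleftrightarrow> gcd ((a ^ (p ^ n) - 1) div (a ^ (p ^ (n - 1)) - 1)) (a ^ (p ^ (n - 1)) - 1) = 1"
proof -
  note a2 = assms(1) and pp = assms(2) and n1 = assms(3)
  have p2: "p \<ge> 2" using pp by (simp add: prime_ge_2_nat)
  define b where "b = a ^ (p ^ (n - 1))"
  define S where "S = (\<Sum>i<p. b ^ i)"
  have pn: "p ^ n = p ^ (n - 1) * p" using n1
    by (metis Suc_diff_1 less_le_trans power_Suc2 zero_less_one)
  have ab: "a ^ (p ^ n) = b ^ p" by (simp add: b_def pn power_mult)
  have ba: "a \<le> b"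
  proof -
    have "p ^ (n - 1) \<ge> 1" using p2 by simp
    then have "a ^ 1 \<le> a ^ (p ^ (n - 1))" using a2 by (intro power_increasing) auto
    then show ?thesis by (simp add: b_def)
  qed
  have b2: "b \<ge> 2" using a2 ba by simp
  have geo: "(b - 1) * S + 1 = b ^ p"
    using geom_nat[of "b - 1" p] b2 by (simp add: S_def Suc_diff_1)
  have Sdef: "(a ^ (p ^ n) - 1) div (a ^ (p ^ (n - 1)) - 1) = S"
  proof -
    have "a ^ (p ^ (n - 1)) - 1 = b - 1" by (simp add: b_def)
    moreover have "a ^ (p ^ n) - 1 = (b - 1) * S" using geo ab by simp
    moreover have "b - 1 > 0" using b2 by simp
    ultimately show ?thesis by simp
  qed
  have abS: "a ^ (p ^ n) - 1 = (b - 1) * S" using geo ab by simp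
  have Sdvd: "S dvd a ^ (p ^ n) - 1" unfolding abS by simp
  have Scong: "[S = p] (mod (b - 1))"
  proof -
    have b1: "[b = 1] (mod (b - 1))" using b2 by (simp add: cong_altdef_nat)
    have "[S = (\<Sum>i<p. 1)] (mod (b - 1))" unfolding S_def
      by (rule cong_sum) (use cong_pow[OF b1] in simp)
    then show ?thesis by simp
  qed
  have gS: "gcd S (b - 1) = gcd p (b - 1)" using Scong by (rule cong_gcd_eq)
  have Sp: "p < S" unfolding S_def using Sp_lem[OF b2 p2] .
  have Sb: "b + 1 \<le> S" unfolding S_def using Sb_lem[OF b2 p2] .
  have S1: "S > 1" using Sp p2 by simp
  have main: "primover a S \<longleftrightarrow> gcd S (b - 1) = 1" (is "?G")
  proof (cases "p dvd b - 1")
    case True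
    have gne: "gcd S (b - 1) \<noteq> 1" using gS gcd_proj1_if_dvd_nat[OF True] p2 by simp
    have pS: "p dvd S"
    proof -
      have "[S = p] (mod p)" using Scong True by (rule cong_dvd_modulus_nat)
      then show ?thesis by (simp add: cong_def dvd_eq_mod_eq_0)
    qed
    have np: "\<not> prime S"
    proof
      assume "prime S"
      then have "p = 1 \<or> p = S" using pS by (simp add: prime_nat_iff)
      then show False using p2 Sp by auto
    qed
    have nop: "\<not> overpseudoprime a S"
    proof
      assume op: "overpseudoprime a S"
      then have cop: "coprime a S" unfolding overpseudoprime_def by blast
      have "[b = a] (mod p)" unfolding b_def using pp by (rule fermat_pow)
      moreover have "[b = 1] (mod p)" using True b2 by (simp add: cong_altdef_nat)
      ultimately have a1: "[a = 1] (mod p)" by (blast intro: cong_trans cong_sym)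
      define s where "s = S div p"
      have sp: "S = s * p" using pS by (simp add: s_def)
      have s0: "0 < s"
      proof (rule ccontr)
        assume "\<not> 0 < s" then have "s = 0" by simp
        then show False using sp S1 by simp
      qed
      have sS: "s < S" using sp p2 s0 by simp
      have sing: "cyc_coset a S s = {s}"
      proof -
        have "s * a ^ j mod S = s" for j
        proof -
          have "[a ^ j = 1] (mod p)" using cong_pow[OF a1, of j] by simp
          moreover have "a ^ j \<ge> 1" using a2 by (simp add: Suc_le_eq)
          ultimately have "p dvd a ^ j - 1" by (simp add: cong_altdef_nat)
          then have "s * p dvd s * (a ^ j - 1)" by (rule mult_dvd_mono[OF dvd_refl])
          then have "s * p dvd s * a ^ j - s" by (simp add: diff_mult_distrib2)
          then have "S dvd s * a ^ j - s" by (simp only: sp)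
          moreover have "s \<le> s * a ^ j" using \<open>a ^ j \<ge> 1\<close> by simp
          ultimately have "[s * a ^ j = s] (mod S)" by (simp add: cong_altdef_nat)
          then show ?thesis using sS by (simp add: cong_def)
        qed
        then show ?thesis unfolding cyc_coset_def by auto
      qed
      let ?h = "ord S a"
      have hpos: "?h > 0" using cop by (simp add: coprime_commute)
      have hcop: "coprime S a" using cop by (simp add: coprime_commute)
      have h2: "?h \<noteq> 1"
      proof
        assume "?h = 1"
        then have "[a = 1] (mod S)" by (simp add: ord_eq_Suc_0_iff)
        then have "S dvd a - 1" using a2 by (simp add: cong_altdef_nat)
        moreover have "a - 1 < S" using ba Sb by simp
        moreover have "a - 1 > 0" using a2 by simp
        ultimately show False by (auto dest: dvd_imp_le)
      qed
      let ?A = "cyc_coset a S ` {1..S-1}"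
      have "S - 1 = sum card ?A" using coset_partition[OF cop S1] .
      also have "\<dots> < sum (\<lambda>_. ?h) ?A"
      proof (rule sum_strict_mono_ex1)
        show "\<forall>x\<in>?A. card x \<le> ?h" using coset_card_le[OF cop] by blast
        show "\<exists>x\<in>?A. card x < ?h"
      proof (rule bexI[of _ "cyc_coset a S s"])
        have "?h \<ge> 2" using hpos h2 by linarith
        then show "card (cyc_coset a S s) < ?h" using sing by simp
        show "cyc_coset a S s \<in> ?A" using s0 sS by simp
      qed
      qed simp
      also have "\<dots> = r_cos a S * h_ord a S" by (simp add: r_cos_def h_ord_def)
      finally have lt: "S - 1 < r_cos a S * h_ord a S" .
      have "S = r_cos a S * h_ord a S + 1" using op unfolding overpseudoprime_def by blast
      then show False using lt by linarith
    qed
    show ?G using gne np nop unfolding primover_def by blast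
  next
    case False
    have "coprime p (b - 1)" using prime_imp_coprime[OF pp False] .
    then have "gcd p (b - 1) = 1" by simp
    then have g1: "gcd S (b - 1) = 1" using gS by simp
    have key: "ord q a = p ^ n" if q: "prime q" "q dvd S" for q
    proof -
      have "a ^ (p ^ n) \<ge> 1" using a2 by (simp add: Suc_le_eq)
      moreover have "q dvd a ^ (p ^ n) - 1" using q Sdvd dvd_trans by blast
      ultimately have "[a ^ (p ^ n) = 1] (mod q)" by (simp add: cong_altdef_nat)
      then have "ord q a dvd p ^ n" by (rule ord_divides[THEN iffD1])
      then obtain i where i: "i \<le> n" "ord q a = p ^ i" using divides_primepow_nat[OF pp] by blast
      show ?thesis
      proof (cases "i = n")
        case True then show ?thesis using i by simp
      next
        case False
        then have "i \<le> n - 1" using i by simp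
        then have "ord q a dvd p ^ (n - 1)" using i by (simp add: le_imp_power_dvd)
        then have "[a ^ (p ^ (n - 1)) = 1] (mod q)" by (rule ord_divides[THEN iffD2])
        then have "[b = 1] (mod q)" by (simp only: b_def)
        then have "q dvd b - 1" using b2 by (simp add: cong_altdef_nat)
        then have "q dvd gcd S (b - 1)" using q by simp
        then have "q dvd 1" by (simp only: g1)
        then have "q = 1" by simp
        then show ?thesis using q by simp
      qed
    qed
    have pn2: "p ^ n \<ge> 2"
    proof -
      have "p ^ 1 \<le> p ^ n" using n1 p2 by (intro power_increasing) auto
      then show ?thesis using p2 by simp
    qed
    have cop: "coprime a S"
    proof (rule ccontr)
      assume "\<not> coprime a S"
      then have "gcd a S \<noteq> 1" using coprime_iff_gcd_eq_1[of a S] by blast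
      then obtain q where q: "prime q" "q dvd gcd a S" using prime_factor_nat by blast
      then have "q dvd a" "q dvd S" by auto
      have "\<not> coprime q a"
      proof
        assume "coprime q a"
        then have "is_unit q" by (rule coprime_common_divisor[OF _ dvd_refl \<open>q dvd a\<close>])
        then show False using q by simp
      qed
      then have "ord q a = 0" by simp
      then show False using key[OF q(1) \<open>q dvd S\<close>] pp by (simp add: prime_gt_0_nat)
    qed
    have oddS: "odd S"
    proof
      assume "even S"
      then have o2: "ord 2 a = p ^ n" using key[of 2] by simp
      have "\<not> 2 dvd a"
      proof
        assume "2 dvd a"
        then have "is_unit (2::nat)" by (rule coprime_common_divisor[OF cop _ \<open>even S\<close>])
        then show False by simp
      qed
      then have "[a = 1] (mod 2)" by (simp add: cong_def odd_iff_mod_2_eq_one)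
      then have "ord 2 a = 1" by (simp add: ord_eq_Suc_0_iff)
      then have "p ^ n = 1" using o2 by simp
      then show False using pn2 by linarith
    qed
    let ?h = "ord S a"
    have hdvd: "?h dvd p ^ n"
    proof -
      have "a ^ (p ^ n) \<ge> 1" using a2 by (simp add: Suc_le_eq)
      then have "[a ^ (p ^ n) = 1] (mod S)" using Sdvd by (simp add: cong_altdef_nat)
      then show ?thesis by (rule ord_divides[THEN iffD1])
    qed
    have hle: "?h \<le> p ^ n" using hdvd pp by (simp add: dvd_imp_le prime_gt_0_nat)
    have full: "card (cyc_coset a S s) = ?h" if s: "s \<in> {1..S-1}" for s
    proof (rule coset_full[OF cop S1])
      show "0 < s" "s < S" using s S1 by auto
      fix q k assume q: "prime q" "q dvd S" and k: "0 < k" "k < ?h"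
      show "\<not> q dvd a ^ k - 1"
      proof
        assume "q dvd a ^ k - 1"
        moreover have "a ^ k \<ge> 1" using a2 by (simp add: Suc_le_eq)
        ultimately have "[a ^ k = 1] (mod q)" by (simp add: cong_altdef_nat)
        then have "ord q a dvd k" by (rule ord_divides[THEN iffD1])
        then have "p ^ n dvd k" using key[OF q] by simp
        then show False using k hle by (auto dest: dvd_imp_le)
      qed
    qed
    let ?A = "cyc_coset a S ` {1..S-1}"
    have "S - 1 = sum card ?A" using coset_partition[OF cop S1] .
    also have "\<dots> = sum (\<lambda>_. ?h) ?A" using full by (intro sum.cong) auto
    also have "\<dots> = r_cos a S * h_ord a S" by (simp add: r_cos_def h_ord_def)
    finally have eqS0: "S - 1 = r_cos a S * h_ord a S" .
    have eqS: "S = r_cos a S * h_ord a S + 1" using eqS0 S1 by linarith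
    have "primover a S"
      unfolding primover_def overpseudoprime_def using S1 oddS cop eqS by blast
    then show ?G using g1 by simp
  qed
  have e1: "a ^ (p ^ (n - 1)) - 1 = b - 1" by (simp add: b_def)
  have Sdef2: "(a ^ (p ^ n) - 1) div (b - 1) = S" using Sdef unfolding e1 .
  show ?thesis unfolding e1 Sdef2 by (rule main)
qed

end
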